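(* Let $R$ be a relational type, possibly containing the type variable $X$ free, with $X\in^+ R$, and let $\gamma$ be an environment defined on the free type variables of $\mathrm{Rec}\,X.R$. Then for all terms $t_1,t_2$: $t_1\,\llbracket \mathrm{Rec}\,X.R \simeq [\mathrm{Rec}\,X.R/X]R\rrbracket_\gamma\,t_2$.
   Context: Terms are those of the pure untyped $\lambda$-calculus, up to $\alpha$-equivalence; $=_{\beta\eta}$ is $\beta\eta$-convertibility. Relational types: $R ::= X \mid R\to R' \mid \forall X.R \mid R^{\cup} \mid R\cdot R' \mid t$ (last form: promotion of a term); $[R/X]R'$ is capture-avoiding substitution. A relation $r$ on terms is $\beta\eta$-closed if $t_1\,r\,t_2$, $t_1'=_{\beta\eta}t_1$, $t_2'=_{\beta\eta}t_2$ imply $t_1'\,r\,t_2'$; $\mathcal{R}$ is the set of such relations; environments $\gamma$ map finitely many type variables to $\mathcal{R}$. Interpretation: $\llbracket X\rrbracket_\gamma=\gamma(X)$; $t\,\llbracket R\to R'\rrbracket_\gamma\,t'$ iff for all $a,a'$ with $a\,\llbracket R\rrbracket_\gamma\,a'$, $t\,a\,\llbracket R'\rrbracket_\gamma\,t'\,a'$; $\llbracket \forall X.R\rrbracket_\gamma=\bigcap_{r\in\mathcal{R}}\llbracket R\rrbracket_{\gamma[X\mapsto r]}$; $t\,\llbracket R^\cup\rrbracket_\gamma\,t'$ iff $t'\,\llbracket R\rrbracket_\gamma\,t$; $t\,\llbracket R\cdot R'\rrbracket_\gamma\,t'$ iff $\exists t''$ with $t\,\llbracket R\rrbracket_\gamma\,t''$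 and $t''\,\llbracket R'\rrbracket_\gamma\,t'$; $\llbracket \hat t\rrbracket_\gamma=\{(t,t')\mid \hat t\,t=_{\beta\eta}t'\}$. Abbreviations: $I:=\lambda x.x$, $K:=\lambda x.\lambda y.x$; $t\bullet R:=t\cdot R\cdot t^\cup$; $R\subseteq R':=(K\,I)\bullet(R\to R')$; $R\Rightarrow R':=K\bullet(R\to R')$; $R\simeq R':=(R\subseteq R')\cdot(R'\subseteq R)$; $\mathrm{Rec}\,X.R := \forall X.(R\subseteq X)\Rightarrow X$. With polarities $p\in\{+,-\}$ and $\bar p$ the other, $X\in^pR$ is defined by: $X\in^+X$; $X\in^pY$ for type variables $Y\ne X$; $X\in^p(R\to R')$ iff $X\in^{\bar p}R$ and $X\in^pR'$; $X\in^p\forall Y.R$ iff $X\in^pR$; $X\in^p(R\cdot R')$ iff $X\in^pR$ and $X\in^pR'$; $X\in^pR^\cup$ iff $X\in^pR$; $X\in^p t$ for every promoted term. *)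

theory Defs
  imports Main
begin

datatype trm = Var nat | App trm trm | Lam trm

primrec lift :: "trm \<Rightarrow> nat \<Rightarrow> trm" where
  "lift (Var i) k = (if i < k then Var i else Var (Suc i))"
| "lift (App s t) k = App (lift s k) (lift t k)"
| "lift (Lam s) k = Lam (lift s (Suc k))"

primrec subst :: "trm \<Rightarrow> trm \<Rightarrow> nat \<Rightarrow> trm" where
  "subst (Var i) s k = (if k < i then Var (i - 1) else if i = k then s else Var i)"
| "subst (App t u) s k = App (subst t s k) (subst u s k)"
| "subst (Lam t) s k = Lam (subst t (lift s 0) (Suc k))"

inductive betaeta :: "trm \<Rightarrow> trm \<Rightarrow> bool" where
  beta: "betaeta (App (Lam s) t) (subst s t 0)"
| eta: "betaeta (Lam (App (lift t 0) (Var 0))) t"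
| appL: "betaeta s s' \<Longrightarrow> betaeta (App s t) (App s' t)"
| appR: "betaeta t t' \<Longrightarrow> betaeta (App s t) (App s t')"
| abs: "betaeta s s' \<Longrightarrow> betaeta (Lam s) (Lam s')"

definition conv :: "trm \<Rightarrow> trm \<Rightarrow> bool" where
  "conv = equivclp betaeta"

datatype rty = TV nat | Arr rty rty | All rty | Cnv rty | Cmp rty rty | Prom trm

primrec liftT :: "rty \<Rightarrow> nat \<Rightarrow> rty" where
  "liftT (TV i) k = (if i < k then TV i else TV (Suc i))"
| "liftT (Arr R S) k = Arr (liftT R k) (liftT S k)"
| "liftT (All R) k = All (liftT R (Suc k))"
| "liftT (Cnv R) k = Cnv (liftT R k)"
| "liftT (Cmp R S) k = Cmp (liftT R k) (liftT S k)"
| "liftT (Prom t) k = Prom t"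

primrec substT :: "rty \<Rightarrow> rty \<Rightarrow> nat \<Rightarrow> rty" where
  "substT (TV i) S k = (if i < k then TV i else if i = k then S else TV (i - 1))"
| "substT (Arr R R') S k = Arr (substT R S k) (substT R' S k)"
| "substT (All R) S k = All (substT R (liftT S 0) (Suc k))"
| "substT (Cnv R) S k = Cnv (substT R S k)"
| "substT (Cmp R R') S k = Cmp (substT R S k) (substT R' S k)"
| "substT (Prom t) S k = Prom t"

primrec fvs :: "rty \<Rightarrow> nat set" where
  "fvs (TV i) = {i}"
| "fvs (Arr R S) = fvs R \<union> fvs S"
| "fvs (All R) = (\<lambda>i. i - 1) ` (fvs R - {0})"
| "fvs (Cnv R) = fvs R"
| "fvs (Cmp R S) = fvs R \<union> fvs S"
| "fvs (Prom t) = {}"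

text \<open>Polarity: pol True k R means "k \<in>+ R", pol False k R means "k \<in>- R".\<close>
primrec pol :: "bool \<Rightarrow> nat \<Rightarrow> rty \<Rightarrow> bool" where
  "pol p k (TV i) = (if i = k then p else True)"
| "pol p k (Arr R S) = (pol (\<not> p) k R \<and> pol p k S)"
| "pol p k (All R) = pol p (Suc k) R"
| "pol p k (Cnv R) = pol p k R"
| "pol p k (Cmp R S) = (pol p k R \<and> pol p k S)"
| "pol p k (Prom t) = True"

definition bclosed :: "(trm \<Rightarrow> trm \<Rightarrow> bool) \<Rightarrow> bool" where
  "bclosed r \<longleftrightarrow> (\<forall>t1 t2 t1' t2'. r t1 t2 \<longrightarrow> conv t1' t1 \<longrightarrow> conv t2' t2 \<longrightarrow> r t1' t2')"

primrec interp :: "(nat \<Rightarrow> trm \<Rightarrow> trm \<Rightarrow> bool) \<Rightarrow> rty \<Rightarrow> trm \<Rightarrow> trm \<Rightarrow> bool" where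
  "interp \<gamma> (TV i) = \<gamma> i"
| "interp \<gamma> (Arr R S) = (\<lambda>t t'. \<forall>a a'. interp \<gamma> R a a' \<longrightarrow> interp \<gamma> S (App t a) (App t' a'))"
| "interp \<gamma> (All R) = (\<lambda>t t'. \<forall>r. bclosed r \<longrightarrow> interp (case_nat r \<gamma>) R t t')"
| "interp \<gamma> (Cnv R) = (\<lambda>t t'. interp \<gamma> R t' t)"
| "interp \<gamma> (Cmp R S) = (\<lambda>t t'. \<exists>t''. interp \<gamma> R t t'' \<and> interp \<gamma> S t'' t')"
| "interp \<gamma> (Prom u) = (\<lambda>t t'. conv (App u t) t')"

definition I_trm :: trm where "I_trm = Lam (Var 0)"
definition K_trm :: trm where "K_trm = Lam (Lam (Var 1))"

definition bullet :: "trm \<Rightarrow> rty \<Rightarrow> rty" where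
  "bullet t R = Cmp (Cmp (Prom t) R) (Cnv (Prom t))"

definition Incl :: "rty \<Rightarrow> rty \<Rightarrow> rty" where
  "Incl R S = bullet (App K_trm I_trm) (Arr R S)"

definition Impl :: "rty \<Rightarrow> rty \<Rightarrow> rty" where
  "Impl R S = bullet K_trm (Arr R S)"

definition Equi :: "rty \<Rightarrow> rty \<Rightarrow> rty" where
  "Equi R S = Cmp (Incl R S) (Incl S R)"

text \<open>Rec X.R = forall X. (R \<subseteq> X) \<Rightarrow> X, with X being index 0 of R.\<close>
definition RecT :: "rty \<Rightarrow> rty" where
  "RecT R = All (Impl (Incl R (TV 0)) (TV 0))"

end

theory Submission
  imports Defs
begin

lemma conv_refl[simp]: "conv t t"
  by (simp add: conv_def)

lemma conv_sym: "conv s t \<Longrightarrow> conv t s"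
  unfolding conv_def by (rule equivclp_sym)

lemma conv_trans: "conv a b \<Longrightarrow> conv b c \<Longrightarrow> conv a c"
  unfolding conv_def by (rule equivclp_trans)

lemma conv_step: "betaeta s t \<Longrightarrow> conv s t"
  unfolding conv_def by blast

lemma conv_appL: "conv s s' \<Longrightarrow> conv (App s t) (App s' t)"
  unfolding conv_def
  by (induct rule: equivclp_induct) (auto intro: equivclp_into_equivclp betaeta.appL)

lemma conv_appR: "conv t t' \<Longrightarrow> conv (App s t) (App s t')"
  unfolding conv_def
  by (induct rule: equivclp_induct) (auto intro: equivclp_into_equivclp betaeta.appR)

lemma conv_app: "conv s s' \<Longrightarrow> conv t t' \<Longrightarrow> conv (App s t) (App s' t')"
  by (meson conv_appL conv_appR conv_trans)

lemma subst_lift: "subst (lift t k) s k = t"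
  by (induct t arbitrary: k s) auto

lemma conv_K: "conv (App (App K_trm x) y) x"
proof -
  have "betaeta (App K_trm x) (Lam (lift x 0))"
    unfolding K_trm_def using betaeta.beta[of "Lam (Var 1)" x] by simp
  hence "conv (App (App K_trm x) y) (App (Lam (lift x 0)) y)"
    by (intro conv_appL conv_step)
  moreover have "betaeta (App (Lam (lift x 0)) y) x"
    using betaeta.beta[of "lift x 0" y] by (simp add: subst_lift)
  ultimately show ?thesis by (meson conv_step conv_trans)
qed

lemma conv_KI: "conv (App (App (App K_trm I_trm) x) y) y"
proof -
  have "conv (App (App (App K_trm I_trm) x) y) (App I_trm y)"
    by (intro conv_appL conv_K)
  moreover have "betaeta (App I_trm y) y"
    unfolding I_trm_def using betaeta.beta[of "Var 0" y] by simp
  ultimately show ?thesis by (meson conv_step conv_trans)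
qed

lemma bclosedD: "bclosed r \<Longrightarrow> r t1 t2 \<Longrightarrow> conv t1' t1 \<Longrightarrow> conv t2' t2 \<Longrightarrow> r t1' t2'"
  unfolding bclosed_def by blast

lemma interp_bclosed:
  "(\<forall>i\<in>fvs R. bclosed (\<gamma> i)) \<Longrightarrow> bclosed (interp \<gamma> R)"
proof (induct R arbitrary: \<gamma>)
  case (TV x)
  then show ?case by simp
next
  case (Arr R1 R2)
  then have b2: "bclosed (interp \<gamma> R2)" by simp
  show ?case unfolding bclosed_def
  proof (intro allI impI)
    fix t1 t2 t1' t2'
    assume h: "interp \<gamma> (Arr R1 R2) t1 t2" "conv t1' t1" "conv t2' t2"
    show "interp \<gamma> (Arr R1 R2) t1' t2'"
    proof (simp, intro allI impI)
      fix a a' assume "interp \<gamma> R1 a a'"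
      then have "interp \<gamma> R2 (App t1 a) (App t2 a')" using h(1) by simp
      then show "interp \<gamma> R2 (App t1' a) (App t2' a')"
        by (rule bclosedD[OF b2]) (auto intro: conv_appL h(2,3))
    qed
  qed
next
  case (All R)
  show ?case unfolding bclosed_def
  proof (intro allI impI)
    fix t1 t2 t1' t2'
    assume h: "interp \<gamma> (All R) t1 t2" "conv t1' t1" "conv t2' t2"
    show "interp \<gamma> (All R) t1' t2'"
    proof (simp, intro allI impI)
      fix r assume br: "bclosed r"
      have "\<forall>i\<in>fvs R. bclosed (case_nat r \<gamma> i)"
      proof
        fix i assume "i \<in> fvs R"
        then show "bclosed (case_nat r \<gamma> i)"
          using All.prems br by (cases i) force+
      qed
      then have "bclosed (interp (case_nat r \<gamma>) R)" by (rule All.hyps)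
      then show "interp (case_nat r \<gamma>) R t1' t2'"
        using h br by (auto intro: bclosedD)
    qed
  qed
next
  case (Cnv R)
  then show ?case unfolding bclosed_def by simp
next
  case (Cmp R1 R2)
  then have b1: "bclosed (interp \<gamma> R1)" and b2: "bclosed (interp \<gamma> R2)" by auto
  show ?case unfolding bclosed_def
  proof (intro allI impI)
    fix t1 t2 t1' t2'
    assume h: "interp \<gamma> (Cmp R1 R2) t1 t2" "conv t1' t1" "conv t2' t2"
    then obtain m where m: "interp \<gamma> R1 t1 m" "interp \<gamma> R2 m t2" by auto
    have "interp \<gamma> R1 t1' m" using bclosedD[OF b1 m(1) h(2) conv_refl] .
    moreover have "interp \<gamma> R2 m t2'" using bclosedD[OF b2 m(2) conv_refl h(3)] .
    ultimately show "interp \<gamma> (Cmp R1 R2) t1' t2'" by auto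
  qed
next
  case (Prom u)
  show ?case unfolding bclosed_def
  proof (intro allI impI)
    fix t1 t2 t1' t2'
    assume h: "interp \<gamma> (Prom u) t1 t2" "conv t1' t1" "conv t2' t2"
    then have c: "conv (App u t1) t2" by simp
    have "conv (App u t1') (App u t1)" by (rule conv_appR[OF h(2)])
    then have "conv (App u t1') t2" using c by (rule conv_trans)
    then have "conv (App u t1') t2'" using conv_sym[OF h(3)] by (rule conv_trans)
    then show "interp \<gamma> (Prom u) t1' t2'" by simp
  qed
qed

definition shift :: "(nat \<Rightarrow> trm \<Rightarrow> trm \<Rightarrow> bool) \<Rightarrow> nat \<Rightarrow> (trm \<Rightarrow> trm \<Rightarrow> bool) \<Rightarrow> nat \<Rightarrow> trm \<Rightarrow> trm \<Rightarrow> bool" where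
  "shift \<gamma> k r = (\<lambda>i. if i < k then \<gamma> i else if i = k then r else \<gamma> (i - 1))"

lemma shift_case: "case_nat r0 (shift \<gamma> k r) = shift (case_nat r0 \<gamma>) (Suc k) r"
  by (rule ext) (auto simp: shift_def split: nat.split)

lemma shift0: "shift \<gamma> 0 r = case_nat r \<gamma>"
  by (rule ext) (auto simp: shift_def split: nat.split)

lemma interp_lift: "interp (shift \<gamma> k r) (liftT S k) = interp \<gamma> S"
proof (induct S arbitrary: \<gamma> k)
  case (All S)
  then show ?case by (simp add: shift_case)
qed (auto simp: shift_def)

lemma interp_subst: "interp \<gamma> (substT R S k) = interp (shift \<gamma> k (interp \<gamma> S)) R"
proof (induct R arbitrary: \<gamma> k S)
  case (All R)
  have "\<And>r. interp (case_nat r \<gamma>) (liftT S 0) = interp \<gamma> S"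
    by (metis interp_lift shift0)
  then show ?case using All by (simp add: shift_case)
qed (auto simp: shift_def)

lemma interp_mono:
  "pol p k R \<Longrightarrow> (\<forall>i. i \<noteq> k \<longrightarrow> \<gamma> i = \<gamma>' i) \<Longrightarrow>
   (if p then \<gamma> k \<le> \<gamma>' k else \<gamma>' k \<le> \<gamma> k) \<Longrightarrow> interp \<gamma> R \<le> interp \<gamma>' R"
proof (induct R arbitrary: p k \<gamma> \<gamma>')
  case (TV x)
  then show ?case by (cases "x = k") (auto split: if_splits)
next
  case (Arr R1 R2)
  have "interp \<gamma>' R1 \<le> interp \<gamma> R1"
    using Arr.hyps(1)[of "\<not> p" k \<gamma>' \<gamma>] Arr.prems by (auto split: if_splits)
  moreover have "interp \<gamma> R2 \<le> interp \<gamma>' R2"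
    using Arr.hyps(2)[of p k \<gamma> \<gamma>'] Arr.prems by auto
  ultimately show ?case by (auto simp: le_fun_def)
next
  case (All R)
  have "\<And>r. interp (case_nat r \<gamma>) R \<le> interp (case_nat r \<gamma>') R"
  proof -
    fix r
    show "interp (case_nat r \<gamma>) R \<le> interp (case_nat r \<gamma>') R"
      apply (rule All.hyps[of p "Suc k"])
      using All.prems by (auto split: nat.split)
  qed
  then show ?case by (auto simp: le_fun_def)
next
  case (Cnv R)
  then have "interp \<gamma> R \<le> interp \<gamma>' R" using Cnv.hyps[of p k \<gamma> \<gamma>'] by simp
  then show ?case by (auto simp: le_fun_def)
next
  case (Cmp R1 R2)
  then have "interp \<gamma> R1 \<le> interp \<gamma>' R1" "interp \<gamma> R2 \<le> interp \<gamma>' R2"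
    using Cmp.hyps(1)[of p k \<gamma> \<gamma>'] Cmp.hyps(2)[of p k \<gamma> \<gamma>'] by simp_all
  then show ?case by (simp add: le_fun_def) blast
qed auto

lemma interp_Incl:
  assumes "bclosed (interp \<gamma> B)"
  shows "interp \<gamma> (Incl A B) x y \<longleftrightarrow> (\<forall>a a'. interp \<gamma> A a a' \<longrightarrow> interp \<gamma> B a a')"
proof
  assume "interp \<gamma> (Incl A B) x y"
  then obtain t3 t'' where c1: "conv (App (App K_trm I_trm) x) t3"
    and ab: "interp \<gamma> (Arr A B) t3 t''" and c2: "conv (App (App K_trm I_trm) y) t''"
    by (auto simp: Incl_def bullet_def)
  show "\<forall>a a'. interp \<gamma> A a a' \<longrightarrow> interp \<gamma> B a a'"
  proof (intro allI impI)
    fix a a' assume "interp \<gamma> A a a'"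
    then have "interp \<gamma> B (App t3 a) (App t'' a')" using ab by simp
    moreover have "conv a (App t3 a)"
      by (meson c1 conv_KI conv_appL conv_sym conv_trans)
    moreover have "conv a' (App t'' a')"
      by (meson c2 conv_KI conv_appL conv_sym conv_trans)
    ultimately show "interp \<gamma> B a a'" by (rule bclosedD[OF assms])
  qed
next
  assume h: "\<forall>a a'. interp \<gamma> A a a' \<longrightarrow> interp \<gamma> B a a'"
  have "interp \<gamma> (Arr A B) (App (App K_trm I_trm) x) (App (App K_trm I_trm) y)"
  proof (simp, intro allI impI)
    fix a a' assume "interp \<gamma> A a a'"
    then have "interp \<gamma> B a a'" using h by simp
    then show "interp \<gamma> B (App (App (App K_trm I_trm) x) a) (App (App (App K_trm I_trm) y) a')"
      by (rule bclosedD[OF assms]) (rule conv_KI)+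
  qed
  then show "interp \<gamma> (Incl A B) x y"
    unfolding Incl_def bullet_def interp.simps by (intro exI conjI) (rule conv_refl, assumption, rule conv_refl)
qed

lemma interp_Impl:
  assumes "bclosed (interp \<gamma> B)"
  shows "interp \<gamma> (Impl A B) x y \<longleftrightarrow> (\<forall>c c'. interp \<gamma> A c c' \<longrightarrow> interp \<gamma> B x y)"
proof
  assume "interp \<gamma> (Impl A B) x y"
  then obtain t3 t'' where c1: "conv (App K_trm x) t3"
    and ab: "interp \<gamma> (Arr A B) t3 t''" and c2: "conv (App K_trm y) t''"
    by (auto simp: Impl_def bullet_def)
  show "\<forall>c c'. interp \<gamma> A c c' \<longrightarrow> interp \<gamma> B x y"
  proof (intro allI impI)
    fix a a' assume "interp \<gamma> A a a'"
    then have "interp \<gamma> B (App t3 a) (App t'' a')" using ab by simp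
    moreover have "conv x (App t3 a)"
      by (meson c1 conv_K conv_appL conv_sym conv_trans)
    moreover have "conv y (App t'' a')"
      by (meson c2 conv_K conv_appL conv_sym conv_trans)
    ultimately show "interp \<gamma> B x y" by (rule bclosedD[OF assms])
  qed
next
  assume h: "\<forall>c c'. interp \<gamma> A c c' \<longrightarrow> interp \<gamma> B x y"
  have "interp \<gamma> (Arr A B) (App K_trm x) (App K_trm y)"
    using h assms by (auto intro: bclosedD conv_K)
  then show "interp \<gamma> (Impl A B) x y"
    unfolding Impl_def bullet_def interp.simps by (intro exI conjI) (rule conv_refl, assumption, rule conv_refl)
qed

lemma interp_Rec:
  "interp \<gamma> (RecT R) x y \<longleftrightarrow>
   (\<forall>r. bclosed r \<longrightarrow> (\<forall>a a'. interp (case_nat r \<gamma>) R a a' \<longrightarrow> r a a') \<longrightarrow> r x y)"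
proof -
  have "\<And>r. bclosed r \<Longrightarrow> interp (case_nat r \<gamma>) (Impl (Incl R (TV 0)) (TV 0)) x y \<longleftrightarrow>
     ((\<forall>a a'. interp (case_nat r \<gamma>) R a a' \<longrightarrow> r a a') \<longrightarrow> r x y)"
  proof -
    fix r assume br: "bclosed r"
    then have b: "bclosed (interp (case_nat r \<gamma>) (TV 0))" by simp
    show "?thesis r"
      unfolding interp_Impl[OF b] interp_Incl[OF b] by simp
  qed
  then show ?thesis by (simp add: RecT_def)
qed

lemma fvs_RecT: "fvs (RecT R) = (\<lambda>i. i - 1) ` (fvs R - {0})"
  by (auto simp: RecT_def Impl_def Incl_def bullet_def)

theorem mainTheorem3:
  fixes R :: rty and \<gamma> :: "nat \<Rightarrow> trm \<Rightarrow> trm \<Rightarrow> bool" and t1 t2 :: trm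
  assumes "pol True 0 R"
    and "\<forall>i \<in> fvs (RecT R). bclosed (\<gamma> i)"
  shows "interp \<gamma> (Equi (RecT R) (substT R (RecT R) 0)) t1 t2"
proof -
  define \<mu> where "\<mu> = interp \<gamma> (RecT R)"
  define F where "F r = interp (case_nat r \<gamma>) R" for r
  have bmu: "bclosed \<mu>" unfolding \<mu>_def using assms(2) by (rule interp_bclosed)
  have bF: "bclosed r \<Longrightarrow> bclosed (F r)" for r
    unfolding F_def
  proof (rule interp_bclosed, rule ballI)
    fix i assume br: "bclosed r" and i: "i \<in> fvs R"
    show "bclosed (case_nat r \<gamma> i)"
    proof (cases i)
      case (Suc j)
      then have "j \<in> fvs (RecT R)" using i by (force simp: fvs_RecT)
      then show ?thesis using assms(2) Suc by simp
    qed (simp add: br)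
  qed
  have monoF: "r \<le> r' \<Longrightarrow> F r \<le> F r'" for r r'
    unfolding F_def by (rule interp_mono[OF assms(1)]) (auto split: nat.split)
  have muI: "\<mu> x y \<longleftrightarrow> (\<forall>r. bclosed r \<longrightarrow> F r \<le> r \<longrightarrow> r x y)" for x y
    unfolding \<mu>_def F_def interp_Rec by (auto simp: le_fun_def)
  have sub: "interp \<gamma> (substT R (RecT R) 0) = F \<mu>"
    unfolding interp_subst shift0 F_def \<mu>_def ..
  have le1: "F \<mu> \<le> \<mu>"
  proof (rule predicate2I)
    fix x y assume h: "F \<mu> x y"
    show "\<mu> x y" unfolding muI
    proof (intro allI impI)
      fix r assume br: "bclosed r" and fr: "F r \<le> r"
      have "\<mu> \<le> r" using muI br fr by blast
      then have "F \<mu> \<le> r" using monoF fr by (meson order_trans)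
      then show "r x y" using h by blast
    qed
  qed
  have le2: "\<mu> \<le> F \<mu>"
  proof (rule predicate2I)
    fix x y assume "\<mu> x y"
    moreover have "F (F \<mu>) \<le> F \<mu>" using monoF le1 by blast
    ultimately show "F \<mu> x y" using muI bF bmu by blast
  qed
  have i1: "interp \<gamma> (Incl (RecT R) (substT R (RecT R) 0)) t1 t1"
    unfolding interp_Incl[OF sub[symmetric, THEN subst, of bclosed, OF bF[OF bmu]]]
    using le2 by (simp add: sub \<mu>_def[symmetric] le_fun_def)
  have i2: "interp \<gamma> (Incl (substT R (RecT R) 0) (RecT R)) t1 t2"
    unfolding interp_Incl[OF bmu[unfolded \<mu>_def]]
    using le1 by (simp add: sub \<mu>_def[symmetric] le_fun_def)
  show ?thesis unfolding Equi_def using i1 i2 by auto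
qed

end
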